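(* Let $M$ be an Orlicz function satisfying the $\Delta_2^\infty$-condition, and let $\phi_U(n):=\|\sum_{k=1}^ne_k\|_{(L_M)_U}$, $n\in\mathbb N$, where $e_k$ are the canonical unit vectors. Then $\phi_U(n)\asymp\Phi_{M^{-1}}(n)$, $n\in\mathbb N$, with constants independent of $n$, where $M^{-1}$ is the inverse function of $M$.
   Context: An Orlicz function is an increasing convex continuous $M:[0,\infty)\to[0,\infty)$ with $M(0)=0$, $M(t)\to\infty$, normalized by $M(1)=1$ (assumed strictly increasing so $M^{-1}$ exists); $M\in\Delta_2^\infty$ means $\sup_{u\ge1}M(2u)/M(u)<\infty$. $L_M=L_M[0,1]$ (Lebesgue measure) has the Luxemburg norm $\|f\|_{L_M}:=\inf\{\lambda>0:\int_0^1M(|f|/\lambda)\le1\}$. For a Banach lattice $X$, $\mathfrak B_n(X)$ is the set of $n$-tuples of pairwise disjoint norm-one elements; $\|a\|_{X_U(n)}:=\sup\{\|\sum_{i=1}^na_ix_i\|_X:(x_i)\in\mathfrak B_n(X)\}$, and $X_U$ is the space of real sequences with $\|a\|_{X_U}:=\sup_n\|(a_i)_{i=1}^n\|_{X_U(n)}<\infty$. For $g:(0,\infty)\to(0,\infty)$, $\Phi_g(u):=\sup_{v\ge\max(1,1/u)}g(vu)/g(v)$, $u>0$. $F\asymp G$ means $c^{-1}G\le F\le cG$ for a constant $c$. *)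

theory Defs
  imports "HOL-Analysis.Analysis"
begin

definition orlicz_function :: "(real \<Rightarrow> real) \<Rightarrow> bool" where
  "orlicz_function M \<longleftrightarrow>
     strict_mono_on {0..} M \<and> convex_on {0..} M \<and> continuous_on {0..} M \<and>
     M 0 = 0 \<and> filterlim M at_top at_top \<and> M 1 = 1"

definition delta2_infty :: "(real \<Rightarrow> real) \<Rightarrow> bool" where
  "delta2_infty M \<longleftrightarrow> (\<exists>C. \<forall>u\<ge>1. M (2 * u) \<le> C * M u)"

definition orlicz_modular :: "(real \<Rightarrow> real) \<Rightarrow> (real \<Rightarrow> real) \<Rightarrow> ennreal" where
  "orlicz_modular M f = (\<integral>\<^sup>+ t. ennreal (M \<bar>f t\<bar>) \<partial>(lebesgue_on {0..1}))"

definition in_LM :: "(real \<Rightarrow> real) \<Rightarrow> (real \<Rightarrow> real) \<Rightarrow> bool" where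
  "in_LM M f \<longleftrightarrow> f \<in> borel_measurable (lebesgue_on {0..1}) \<and>
     (\<exists>r>0. orlicz_modular M (\<lambda>t. f t / r) \<le> 1)"

definition lux_norm :: "(real \<Rightarrow> real) \<Rightarrow> (real \<Rightarrow> real) \<Rightarrow> real" where
  "lux_norm M f = Inf {r. r > 0 \<and> orlicz_modular M (\<lambda>t. f t / r) \<le> 1}"

definition disj_normone :: "(real \<Rightarrow> real) \<Rightarrow> nat \<Rightarrow> (nat \<Rightarrow> real \<Rightarrow> real) \<Rightarrow> bool" where
  "disj_normone M n x \<longleftrightarrow>
     (\<forall>i\<in>{1..n}. in_LM M (x i) \<and> lux_norm M (x i) = 1) \<and>
     (\<forall>i\<in>{1..n}. \<forall>j\<in>{1..n}. i \<noteq> j \<longrightarrow>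
        (AE t in lebesgue_on {0..1}. x i t = 0 \<or> x j t = 0))"

definition XU_n :: "(real \<Rightarrow> real) \<Rightarrow> nat \<Rightarrow> (nat \<Rightarrow> real) \<Rightarrow> ereal" where
  "XU_n M n a = Sup {ereal (lux_norm M (\<lambda>t. \<Sum>i\<in>{1..n}. a i * x i t)) | x. disj_normone M n x}"

definition XU :: "(real \<Rightarrow> real) \<Rightarrow> (nat \<Rightarrow> real) \<Rightarrow> ereal" where
  "XU M a = (SUP n. XU_n M n a)"

definition phiU :: "(real \<Rightarrow> real) \<Rightarrow> nat \<Rightarrow> ereal" where
  "phiU M n = XU M (\<lambda>k. if 1 \<le> k \<and> k \<le> n then 1 else 0)"

definition Phi_fun :: "(real \<Rightarrow> real) \<Rightarrow> real \<Rightarrow> ereal" where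
  "Phi_fun g u = Sup {ereal (g (v * u) / g v) | v. v \<ge> max 1 (1 / u)}"

definition orlicz_inv :: "(real \<Rightarrow> real) \<Rightarrow> real \<Rightarrow> real" where
  "orlicz_inv M = inv_into {0..} M"

end

theory Submission
  imports Defs
begin


context fixes M :: "real \<Rightarrow> real" assumes orl: "orlicz_function M"
begin

lemma M_less: "0 \<le> x \<Longrightarrow> x < y \<Longrightarrow> M x < M y"
  using orl unfolding orlicz_function_def strict_mono_on_def by auto

lemma M_mono: "0 \<le> x \<Longrightarrow> x \<le> y \<Longrightarrow> M x \<le> M y"
  using M_less by (cases "x = y") (auto simp: less_le)

lemma M_le_iff: "0 \<le> x \<Longrightarrow> 0 \<le> y \<Longrightarrow> M x \<le> M y \<longleftrightarrow> x \<le> y"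
  using M_less M_mono by (meson not_le)

lemma M0: "M 0 = 0" and M1: "M 1 = 1"
  using orl unfolding orlicz_function_def by auto

lemma M_nonneg: "0 \<le> x \<Longrightarrow> 0 \<le> M x"
  using M_mono[of 0 x] M0 by simp

lemma M_surj: assumes "0 \<le> y" shows "\<exists>x\<ge>0. M x = y"
proof -
  have lim: "filterlim M at_top at_top" using orl unfolding orlicz_function_def by auto
  then have "eventually (\<lambda>x. M x \<ge> y) at_top" by (simp add: filterlim_at_top)
  then obtain b where b: "\<And>x. x \<ge> b \<Longrightarrow> M x \<ge> y" by (auto simp: eventually_at_top_linorder)
  define c where "c = max b 0"
  have c: "c \<ge> 0" "M c \<ge> y" using b by (auto simp: c_def)
  have cont: "continuous_on {0..c} M"
    using orl unfolding orlicz_function_def by (meson atLeastAtMost_iff atLeast_iff continuous_on_subset subsetI)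
  from IVT'[of M 0 y c, OF _ _ _ cont] c assms M0 obtain x where "0 \<le> x" "x \<le> c" "M x = y" by auto
  then show ?thesis by auto
qed

lemma inj_M: "inj_on M {0..}"
  using orl unfolding orlicz_function_def using strict_mono_on_imp_inj_on by blast

lemma ginv: assumes "0 \<le> y" shows "orlicz_inv M y \<ge> 0" "M (orlicz_inv M y) = y"
proof -
  have "y \<in> M ` {0..}" using M_surj[OF assms] by auto
  then show "orlicz_inv M y \<ge> 0" "M (orlicz_inv M y) = y"
    unfolding orlicz_inv_def using inv_into_into[of y M "{0..}"] f_inv_into_f[of y M "{0..}"] by auto
qed

lemma g_M: "0 \<le> x \<Longrightarrow> orlicz_inv M (M x) = x"
  unfolding orlicz_inv_def using inv_into_f_f[OF inj_M] by auto

lemma g_mono: "0 \<le> y \<Longrightarrow> y \<le> z \<Longrightarrow> orlicz_inv M y \<le> orlicz_inv M z"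
  using ginv[of y] ginv[of z] M_le_iff[of "orlicz_inv M y" "orlicz_inv M z"] by auto

lemma g_le_iff: "0 \<le> y \<Longrightarrow> 0 \<le> x \<Longrightarrow> orlicz_inv M y \<le> x \<longleftrightarrow> y \<le> M x"
  using ginv[of y] M_le_iff[of "orlicz_inv M y" x] by auto

lemma g_ge_iff: "0 \<le> y \<Longrightarrow> 0 \<le> x \<Longrightarrow> x \<le> orlicz_inv M y \<longleftrightarrow> M x \<le> y"
  using ginv[of y] M_le_iff[of x "orlicz_inv M y"] by auto

lemma M_scale: assumes "0 \<le> w" "1 \<le> k" shows "k * M w \<le> M (k * w)"
proof -
  have cv: "convex_on {0..} M" using orl unfolding orlicz_function_def by auto
  have "M ((1 - 1/k) *\<^sub>R 0 + (1/k) *\<^sub>R (k*w)) \<le> (1 - 1/k) * M 0 + (1/k) * M (k*w)"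
    by (rule convex_onD[OF cv]) (use assms in auto)
  then have "M w \<le> (1/k) * M (k*w)" using assms M0 by simp
  then show ?thesis using assms by (simp add: field_simps)
qed

end


context fixes M :: "real \<Rightarrow> real" assumes orl: "orlicz_function M"
begin

lemma g1: "orlicz_inv M 1 = 1" using g_M[OF orl, of 1] M1[OF orl] by simp

lemma Phi_props:
  fixes n :: nat assumes n: "n \<ge> 1"
  shows "\<exists>P. Phi_fun (orlicz_inv M) (real n) = ereal P \<and> 1 \<le> P \<and> P \<le> real n \<and>
           (\<forall>t\<ge>1. real n * M t \<le> M (P * t))"
proof -
  let ?g = "orlicz_inv M"
  define S where "S = {ereal (?g (v * real n) / ?g v) | v. v \<ge> max 1 (1 / real n)}"
  have mx: "max 1 (1 / real n) = 1" using n by auto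
  have Phi: "Phi_fun ?g (real n) = Sup S" unfolding Phi_fun_def S_def by simp
  have gv1: "?g v \<ge> 1" if "v \<ge> 1" for v using g_mono[OF orl, of 1 v] that g1 by simp
  have ub: "x \<le> ereal (real n)" if "x \<in> S" for x
  proof -
    obtain v where v: "v \<ge> 1" "x = ereal (?g (v * real n) / ?g v)" using \<open>x \<in> S\<close> mx unfolding S_def by auto
    have "v * real n \<le> M (real n * ?g v)"
      using M_scale[OF orl, of "?g v" "real n"] ginv[OF orl, of v] v n by (simp add: mult.commute)
    then have "?g (v * real n) \<le> real n * ?g v" using g_le_iff[OF orl, of "v * real n" "real n * ?g v"] v gv1[OF v(1)] by simp
    then show ?thesis using v gv1[OF v(1)] by (simp add: divide_le_eq)
  qed
  have mem: "ereal (?g (1 * real n) / ?g 1) \<in> S" unfolding S_def using mx by (intro CollectI exI[of _ 1]) simp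
  have "?g (real n) \<ge> 1" using gv1 n by simp
  then have lb: "ereal 1 \<le> Sup S" using Sup_upper[OF mem] g1 by (metis div_by_1 ereal_less_eq(3) mult_1 order_trans)
  have ubS: "Sup S \<le> ereal (real n)" using ub by (simp add: Sup_least)
  define P where "P = real_of_ereal (Sup S)"
  have SP: "Sup S = ereal P" unfolding P_def using lb ubS by (cases "Sup S") auto
  have P1: "1 \<le> P" "P \<le> real n" using lb ubS SP by auto
  have key: "real n * M t \<le> M (P * t)" if t: "t \<ge> 1" for t
  proof -
    have Mt: "M t \<ge> 1" using M_mono[OF orl, of 1 t] M1[OF orl] t by simp
    have "ereal (?g (M t * real n) / ?g (M t)) \<in> S" unfolding S_def using mx Mt by auto
    then have "ereal (?g (M t * real n) / ?g (M t)) \<le> ereal P" using SP Sup_upper by metis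
    then have "?g (M t * real n) / t \<le> P" using g_M[OF orl, of t] t by simp
    then have "?g (M t * real n) \<le> P * t" using t by (simp add: divide_le_eq)
    then have "M t * real n \<le> M (P * t)" using g_le_iff[OF orl, of "M t * real n" "P * t"] Mt P1 t by simp
    then show ?thesis by (simp add: mult.commute)
  qed
  show ?thesis using Phi SP P1 key by auto
qed

end


lemma lux_norm_le:
  assumes "r > 0" "orlicz_modular M (\<lambda>t. f t / r) \<le> 1"
  shows "lux_norm M f \<le> r"
  unfolding lux_norm_def by (rule cInf_lower) (use assms in \<open>auto intro: bdd_belowI[of _ 0]\<close>)

lemma lux_norm_ge:
  assumes "r > 0" "orlicz_modular M (\<lambda>t. f t / r) \<le> 1"
    and "\<And>r. r > 0 \<Longrightarrow> orlicz_modular M (\<lambda>t. f t / r) \<le> 1 \<Longrightarrow> c \<le> r"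
  shows "c \<le> lux_norm M f"
  unfolding lux_norm_def by (rule cInf_greatest) (use assms in auto)

lemma meas_Ico: assumes "0 \<le> a" "a \<le> b" "b \<le> 1"
  shows "{a..<b} \<in> sets (lebesgue_on {0..1::real})"
    and "emeasure (lebesgue_on {0..1::real}) {a..<b} = ennreal (b - a)"
proof -
  have s: "{0..1::real} \<inter> space lebesgue \<in> sets lebesgue" by simp
  show "{a..<b} \<in> sets (lebesgue_on {0..1::real})"
    using assms by (subst sets_restrict_space_iff[OF s]) auto
  have "emeasure (lebesgue_on {0..1::real}) {a..<b} = emeasure lebesgue {a..<b}"
    by (rule emeasure_restrict_space) (use assms in auto)
  also have "\<dots> = ennreal (b - a)" using assms by simp
  finally show "emeasure (lebesgue_on {0..1::real}) {a..<b} = ennreal (b - a)" .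
qed

lemma space_leb01: "space (lebesgue_on {0..1::real}) = {0..1}" by simp

lemma emeasure_leb01: "emeasure (lebesgue_on {0..1::real}) (space (lebesgue_on {0..1::real})) = 1"
  using meas_Ico(2)[of 0 1] 
  by (simp add: emeasure_restrict_space)

context fixes M :: "real \<Rightarrow> real" assumes orl: "orlicz_function M"
begin

lemma modular_mono:
  assumes "\<And>t. \<bar>f t\<bar> \<le> \<bar>h t\<bar>"
  shows "orlicz_modular M f \<le> orlicz_modular M h"
  unfolding orlicz_modular_def
  by (rule nn_integral_mono) (use assms M_mono[OF orl] in \<open>auto intro: ennreal_leI\<close>)

lemma norm_one_half:
  assumes "in_LM M f" "lux_norm M f = 1"
  shows "orlicz_modular M (\<lambda>t. f t / 2) \<le> 1"
proof -
  let ?S = "{r. r > 0 \<and> orlicz_modular M (\<lambda>t. f t / r) \<le> 1}"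
  have ne: "?S \<noteq> {}" using assms(1) unfolding in_LM_def by auto
  have "Inf ?S < 2" using assms(2) unfolding lux_norm_def by simp
  then obtain r where r: "r \<in> ?S" "r < 2" using cInf_less_iff[OF ne, of 2] bdd_belowI[of ?S 0] by auto
  have "orlicz_modular M (\<lambda>t. f t / 2) \<le> orlicz_modular M (\<lambda>t. f t / r)"
  proof (rule modular_mono)
    fix t have "\<bar>f t\<bar> / 2 \<le> \<bar>f t\<bar> / r" by (rule divide_left_mono) (use r in auto)
    then show "\<bar>f t / 2\<bar> \<le> \<bar>f t / r\<bar>" using r by (simp add: abs_divide)
  qed
  then show ?thesis using r by auto
qed

lemma modular_ind:
  assumes "0 \<le> c" "0 \<le> a" "a \<le> b" "b \<le> 1" "r > 0"
  shows "orlicz_modular M (\<lambda>t. c * indicator {a..<b} t / r) = ennreal (M (c / r) * (b - a))"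
proof -
  have "orlicz_modular M (\<lambda>t. c * indicator {a..<b} t / r)
      = (\<integral>\<^sup>+ t. ennreal (M (c / r)) * indicator {a..<b} t \<partial>(lebesgue_on {0..1}))"
    unfolding orlicz_modular_def
    by (rule nn_integral_cong) (use assms M0[OF orl] in \<open>auto simp: indicator_def\<close>)
  also have "\<dots> = ennreal (M (c / r)) * ennreal (b - a)"
    using nn_integral_cmult_indicator[OF meas_Ico(1)] meas_Ico(2) assms by simp
  also have "\<dots> = ennreal (M (c / r) * (b - a))"
    using assms M_nonneg[OF orl, of "c/r"] by (simp add: ennreal_mult)
  finally show ?thesis .
qed

end


lemma sum_ind_intervals:
  fixes h :: real assumes "h > 0"
  shows "(\<Sum>i\<in>{1..n}. indicator {(real i - 1) * h..<real i * h} t) = (indicator {0..<real n * h} t :: real)"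
proof (induction n)
  case 0 then show ?case by simp
next
  case (Suc n)
  have "{1..Suc n} = insert (Suc n) {1..n}" by auto
  then have "(\<Sum>i\<in>{1..Suc n}. indicator {(real i - 1) * h..<real i * h} t)
      = indicator {real n * h..<real (Suc n) * h} t + (indicator {0..<real n * h} t :: real)"
    using Suc by simp
  also have "\<dots> = indicator {0..<real (Suc n) * h} t"
    using assms by (auto simp: indicator_def algebra_simps)
       (smt (verit) mult_nonneg_nonneg of_nat_0_le_iff)+
  finally show ?case .
qed

lemma disj_intervals:
  fixes h :: real assumes "h > 0" "(i::nat) < j"
    "t \<in> {(real i - 1) * h..<real i * h}" "t \<in> {(real j - 1) * h..<real j * h}"
  shows False
proof -
  have "real i \<le> real j - 1" using assms(2) by linarith
  then have "real i * h \<le> (real j - 1) * h" using assms(1) by (simp add: mult_right_mono)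
  then show False using assms(3,4) by auto
qed

context fixes M :: "real \<Rightarrow> real" assumes orl: "orlicz_function M"
begin

lemma lower_bound:
  fixes n :: nat assumes n: "n \<ge> 1" and v: "v \<ge> 1"
  shows "ereal (orlicz_inv M (v * real n) / orlicz_inv M v) \<le> phiU M n"
proof -
  let ?g = "orlicz_inv M"
  define h where "h = 1 / (v * real n)"
  define K where "K = ?g (v * real n)"
  define A where "A = (\<lambda>i::nat. {(real i - 1) * h..<real i * h})"
  define x where "x = (\<lambda>i t. K * indicator (A i) t)"
  define a where "a = (\<lambda>k::nat. if 1 \<le> k \<and> k \<le> n then (1::real) else 0)"
  have hpos: "h > 0" using n v unfolding h_def by auto
  have vn1: "v * real n \<ge> 1" using n v by (metis mult_mono' of_nat_1 of_nat_le_iff one_le_numeral order.trans mult_1 zero_le_one)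
  have K1: "K \<ge> 1" unfolding K_def using g_mono[OF orl, of 1 "v * real n"] vn1 g1[OF orl] by simp
  have MK: "M K = v * real n" unfolding K_def using ginv[OF orl, of "v * real n"] vn1 by simp
  have nh: "real n * h = 1 / v" unfolding h_def using n by simp
  have Ai: "0 \<le> (real i - 1) * h" "(real i - 1) * h \<le> real i * h" "real i * h \<le> 1" if "i \<in> {1..n}" for i
  proof -
    show "0 \<le> (real i - 1) * h" using that hpos by auto
    show "(real i - 1) * h \<le> real i * h" using hpos by simp
    have "real i * h \<le> real n * h" using that hpos by (simp add: mult_right_mono)
    also have "\<dots> \<le> 1" using nh v by simp
    finally show "real i * h \<le> 1" .
  qed
  have modx: "orlicz_modular M (\<lambda>t. x i t / r) = ennreal (M (K / r) * h)" if "i \<in> {1..n}" "r > 0" for i r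
    unfolding x_def A_def using modular_ind[OF orl, of K "(real i - 1) * h" "real i * h" r] Ai[OF that(1)] K1 that(2)
    by (simp add: algebra_simps)
  have Kh: "M K * h = 1" using MK unfolding h_def using n v by simp
  have xin: "in_LM M (x i) \<and> lux_norm M (x i) = 1" if i: "i \<in> {1..n}" for i
  proof -
    have m1: "orlicz_modular M (\<lambda>t. x i t / 1) \<le> 1" using modx[OF i, of 1] Kh by simp
    have meas: "x i \<in> borel_measurable (lebesgue_on {0..1})"
      unfolding x_def A_def using meas_Ico(1)[OF Ai[OF i]] by (intro borel_measurable_times measurable_const borel_measurable_indicator) auto
    have "in_LM M (x i)" unfolding in_LM_def using meas m1 by (intro conjI exI[of _ 1]) auto
    moreover have "lux_norm M (x i) \<le> 1" using lux_norm_le[of 1 M "x i"] m1 by simp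
    moreover have "1 \<le> lux_norm M (x i)"
    proof (rule lux_norm_ge[OF _ m1])
      fix r :: real assume r: "r > 0" "orlicz_modular M (\<lambda>t. x i t / r) \<le> 1"
      then have "M (K / r) * h \<le> 1" using modx[OF i r(1)] by simp
      then have "M (K / r) * h \<le> M K * h" using Kh by simp
      then have "M (K / r) \<le> M K" using hpos by simp
      then have "K / r \<le> K" using M_le_iff[OF orl, of "K/r" K] K1 r by simp
      then show "1 \<le> r" using K1 r by (simp add: divide_le_eq)
    qed simp
    ultimately show ?thesis by simp
  qed
  have disj: "disj_normone M n x"
    unfolding disj_normone_def
  proof (intro conjI ballI impI)
    fix i j assume ij: "i \<in> {1..n}" "j \<in> {1..n}" "i \<noteq> j"
    have "x i t = 0 \<or> x j t = 0" for t
    proof (cases "i < j")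
      case True then show ?thesis using disj_intervals[OF hpos True, of t] unfolding x_def A_def by (auto simp: indicator_def)
    next
      case False then have "j < i" using ij by simp
      then show ?thesis using disj_intervals[OF hpos, of j i t] unfolding x_def A_def by (auto simp: indicator_def)
    qed
    then show "AE t in lebesgue_on {0..1}. x i t = 0 \<or> x j t = 0" by simp
  qed (use xin in auto)
  have sumeq: "(\<lambda>t. \<Sum>i\<in>{1..n}. a i * x i t) = (\<lambda>t. K * indicator {0..<1/v} t)"
  proof
    fix t
    have "(\<Sum>i\<in>{1..n}. a i * x i t) = K * (\<Sum>i\<in>{1..n}. indicator (A i) t)"
      unfolding a_def x_def by (simp add: sum_distrib_left)
    also have "\<dots> = K * indicator {0..<1/v} t"
      unfolding A_def using sum_ind_intervals[OF hpos, where n=n and t=t] nh by simp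
    finally show "(\<Sum>i\<in>{1..n}. a i * x i t) = K * indicator {0..<1/v} t" .
  qed
  have gv: "?g v \<ge> 1" using g_mono[OF orl, of 1 v] v g1[OF orl] by simp
  have Mgv: "M (?g v) = v" using ginv[OF orl, of v] v by simp
  have modf: "orlicz_modular M (\<lambda>t. K * indicator {0..<1/v} t / r) = ennreal (M (K / r) * (1/v))" if "r > 0" for r
    using modular_ind[OF orl, of K 0 "1/v" r] K1 v that by simp
  have low: "K / ?g v \<le> lux_norm M (\<lambda>t. K * indicator {0..<1/v} t)"
  proof (rule lux_norm_ge)
    show "K / ?g v > 0" using K1 gv by simp
    show "orlicz_modular M (\<lambda>t. K * indicator {0..<1/v} t / (K / ?g v)) \<le> 1"
      using modf[of "K / ?g v"] K1 gv Mgv v by simp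
    fix r :: real assume r: "r > 0" "orlicz_modular M (\<lambda>t. K * indicator {0..<1/v} t / r) \<le> 1"
    then have "M (K / r) * (1/v) \<le> 1" using modf[OF r(1)] by simp
    then have "M (K / r) \<le> v" using v by (simp add: field_simps)
    then have "K / r \<le> ?g v" using g_ge_iff[OF orl, of v "K/r"] v K1 r by simp
    then show "K / ?g v \<le> r" using r gv by (simp add: field_simps)
  qed
  have "ereal (lux_norm M (\<lambda>t. \<Sum>i\<in>{1..n}. a i * x i t)) \<le> XU_n M n a"
    unfolding XU_n_def by (rule Sup_upper) (use disj in blast)
  also have "\<dots> \<le> XU M a" unfolding XU_def by (rule SUP_upper) simp
  finally have 1: "ereal (lux_norm M (\<lambda>t. \<Sum>i\<in>{1..n}. a i * x i t)) \<le> phiU M n"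
    unfolding phiU_def a_def .
  have 2: "ereal (K / ?g v) \<le> ereal (lux_norm M (\<lambda>t. \<Sum>i\<in>{1..n}. a i * x i t))"
    unfolding sumeq using low by simp
  have "ereal (K / ?g v) \<le> phiU M n" using order_trans[OF 2 1] .
  then show ?thesis unfolding K_def .
qed

end


lemma sum_single:
  fixes x :: "nat \<Rightarrow> real"
  assumes "finite J" "\<forall>i\<in>J. \<forall>j\<in>J. i \<noteq> j \<longrightarrow> x i = 0 \<or> x j = 0"
  shows "(\<Sum>i\<in>J. x i) = 0 \<or> (\<exists>j\<in>J. (\<Sum>i\<in>J. x i) = x j)"
proof (cases "\<exists>j\<in>J. x j \<noteq> 0")
  case False then show ?thesis by simp
next
  case True
  then obtain j where j: "j \<in> J" "x j \<noteq> 0" by auto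
  have "(\<Sum>i\<in>J. x i) = x j + (\<Sum>i\<in>J - {j}. x i)" using sum.remove[OF assms(1) j(1)] .
  also have "(\<Sum>i\<in>J - {j}. x i) = 0" using assms(2) j by (intro sum.neutral) blast
  finally show ?thesis using j by auto
qed

context fixes M :: "real \<Rightarrow> real" assumes orl: "orlicz_function M"
begin

lemma M_abs_meas:
  assumes "f \<in> borel_measurable N"
  shows "(\<lambda>t. M \<bar>f t\<bar>) \<in> borel_measurable N"
proof -
  have c: "continuous_on {0..} M" using orl unfolding orlicz_function_def by auto
  have "continuous_on UNIV (\<lambda>y. M \<bar>y\<bar>)"
    by (rule continuous_on_compose2[OF c]) (auto intro: continuous_intros)
  then have "(\<lambda>y. M \<bar>y\<bar>) \<in> borel_measurable borel" by (rule borel_measurable_continuous_onI)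
  from measurable_compose[OF assms this] show ?thesis by simp
qed

lemma scalar_bound:
  fixes n :: nat assumes n: "n \<ge> 1" and P: "P > 0" and key: "\<forall>t\<ge>1. real n * M t \<le> M (P * t)"
    and s: "s \<ge> 0"
  shows "M (s / P) \<le> M s / real n + 1"
proof (cases "s \<le> P")
  case True
  then have "M (s / P) \<le> M 1" using M_mono[OF orl, of "s/P" 1] P s by simp
  then show ?thesis using M1[OF orl] M_nonneg[OF orl s] by (smt (verit) divide_nonneg_nonneg of_nat_0_le_iff)
next
  case False
  then have "s / P \<ge> 1" using P by simp
  then have "real n * M (s / P) \<le> M (P * (s / P))" using key by blast
  then have "real n * M (s / P) \<le> M s" using P by simp
  then have "M (s / P) \<le> M s / real n" using n by (simp add: field_simps)
  then show ?thesis by simp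
qed

lemma pointwise_bound:
  fixes n :: nat and x :: "nat \<Rightarrow> real" assumes n: "n \<ge> 1" and P: "P > 0" and key: "\<forall>t\<ge>1. real n * M t \<le> M (P * t)"
    and J: "finite J" and disj: "\<forall>i\<in>J. \<forall>j\<in>J. i \<noteq> j \<longrightarrow> x i = 0 \<or> x j = 0"
  shows "M \<bar>(\<Sum>i\<in>J. x i) / (4 * P)\<bar> \<le> (\<Sum>i\<in>J. M \<bar>x i / 2\<bar> / (2 * real n)) + 1 / 2"
proof -
  have nn: "0 \<le> (\<Sum>i\<in>J. M \<bar>x i / 2\<bar> / (2 * real n))"
    by (intro sum_nonneg divide_nonneg_nonneg M_nonneg[OF orl]) auto
  let ?S = "\<Sum>i\<in>J. x i"
  have h1: "2 * M \<bar>?S / (4 * P)\<bar> \<le> M \<bar>?S / (2 * P)\<bar>"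
    using M_scale[OF orl, of "\<bar>?S / (4 * P)\<bar>" 2] P by (simp add: abs_divide)
  consider "?S = 0" | j where "j \<in> J" "?S = x j" using sum_single[OF J disj] by blast
  then show ?thesis
  proof cases
    case 1 then show ?thesis using nn M0[OF orl] by simp
  next
    case 2
    have "M \<bar>?S / (2 * P)\<bar> = M (\<bar>x j / 2\<bar> / P)" using 2 P by (simp add: abs_divide)
    also have "\<dots> \<le> M \<bar>x j / 2\<bar> / real n + 1" by (rule scalar_bound[OF n P key]) simp
    finally have "M \<bar>?S / 4 / P\<bar> \<le> (M \<bar>x j / 2\<bar> / real n + 1) / 2" using h1 by simp
    moreover have "M \<bar>x j / 2\<bar> / (2 * real n) \<le> (\<Sum>i\<in>J. M \<bar>x i / 2\<bar> / (2 * real n))"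
      by (rule member_le_sum[OF 2(1) _ J]) (intro divide_nonneg_nonneg M_nonneg[OF orl]; simp)
    ultimately show ?thesis by (simp add: field_simps)
  qed
qed

end


context fixes M :: "real \<Rightarrow> real" assumes orl: "orlicz_function M"
begin

lemma upper_norm:
  fixes n :: nat assumes n: "n \<ge> 1" and P: "P > 0" and key: "\<forall>t\<ge>1. real n * M t \<le> M (P * t)"
    and x: "disj_normone M m x"
  shows "lux_norm M (\<lambda>t. \<Sum>i\<in>{1..m}. (if 1 \<le> i \<and> i \<le> n then 1 else 0) * x i t) \<le> 4 * P"
proof -
  define J where "J = {i\<in>{1..m}. i \<le> n}"
  have J: "finite J" "J \<subseteq> {1..m}" unfolding J_def by auto
  have "J \<subseteq> {1..n}" unfolding J_def by auto
  then have cardJ: "card J \<le> n" using card_mono[of "{1..n}" J] by simp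
  define f where "f = (\<lambda>t. \<Sum>i\<in>J. x i t)"
  have feq: "(\<lambda>t. \<Sum>i\<in>{1..m}. (if 1 \<le> i \<and> i \<le> n then 1 else 0) * x i t) = f"
  proof
    fix t
    have "(\<Sum>i\<in>{1..m}. (if 1 \<le> i \<and> i \<le> n then 1 else 0) * x i t) = (\<Sum>i\<in>{1..m}. if i \<le> n then x i t else 0)"
      by (intro sum.cong) auto
    also have "\<dots> = (\<Sum>i\<in>J. x i t)" unfolding J_def by (rule sum.inter_filter[symmetric]) simp
    finally show "(\<Sum>i\<in>{1..m}. (if 1 \<le> i \<and> i \<le> n then 1 else 0) * x i t) = f t" unfolding f_def .
  qed
  have xi: "in_LM M (x i)" "lux_norm M (x i) = 1" if "i \<in> J" for i
    using x J that unfolding disj_normone_def by auto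
  have half: "orlicz_modular M (\<lambda>t. x i t / 2) \<le> 1" if "i \<in> J" for i
    using norm_one_half[OF orl xi[OF that]] .
  have measx: "x i \<in> borel_measurable (lebesgue_on {0..1})" if "i \<in> J" for i
    using xi(1)[OF that] unfolding in_LM_def by auto
  have AEd: "AE t in lebesgue_on {0..1}. \<forall>p\<in>J \<times> J. fst p \<noteq> snd p \<longrightarrow> x (fst p) t = 0 \<or> x (snd p) t = 0"
  proof (rule AE_finite_allI)
    show "finite (J \<times> J)" using J by simp
    fix p assume p: "p \<in> J \<times> J"
    show "AE t in lebesgue_on {0..1}. fst p \<noteq> snd p \<longrightarrow> x (fst p) t = 0 \<or> x (snd p) t = 0"
    proof (cases "fst p = snd p")
      case False
      have "fst p \<in> {1..m}" "snd p \<in> {1..m}" using p J(2) by auto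
      then have "AE t in lebesgue_on {0..1}. x (fst p) t = 0 \<or> x (snd p) t = 0"
        using x False unfolding disj_normone_def by blast
      then show ?thesis by (rule AE_mp) simp
    qed simp
  qed
  have pw: "AE t in lebesgue_on {0..1}. ennreal (M \<bar>f t / (4 * P)\<bar>)
      \<le> (\<Sum>i\<in>J. ennreal (M \<bar>x i t / 2\<bar> / (2 * real n))) + ennreal (1/2)"
  proof (rule AE_mp[OF AEd], intro AE_I2 impI)
    fix t assume d: "\<forall>p\<in>J \<times> J. fst p \<noteq> snd p \<longrightarrow> x (fst p) t = 0 \<or> x (snd p) t = 0"
    have d': "\<forall>i\<in>J. \<forall>j\<in>J. i \<noteq> j \<longrightarrow> x i t = 0 \<or> x j t = 0" using d by auto
    have "M \<bar>f t / (4 * P)\<bar> \<le> (\<Sum>i\<in>J. M \<bar>x i t / 2\<bar> / (2 * real n)) + 1 / 2"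
      unfolding f_def using pointwise_bound[OF orl n P key J(1), of "\<lambda>i. x i t"] d' by simp
    then have "ennreal (M \<bar>f t / (4 * P)\<bar>) \<le> ennreal ((\<Sum>i\<in>J. M \<bar>x i t / 2\<bar> / (2 * real n)) + 1 / 2)"
      by (rule ennreal_leI)
    moreover have "0 \<le> (\<Sum>i\<in>J. M \<bar>x i t / 2\<bar> / (2 * real n))"
      by (intro sum_nonneg divide_nonneg_nonneg M_nonneg[OF orl]) auto
    ultimately have "ennreal (M \<bar>f t / (4 * P)\<bar>) \<le> ennreal ((\<Sum>i\<in>J. M \<bar>x i t / 2\<bar> / (2 * real n)) + 1 / 2)"
      by simp
    also have "\<dots> = (\<Sum>i\<in>J. ennreal (M \<bar>x i t / 2\<bar> / (2 * real n))) + ennreal (1/2)"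
      using \<open>0 \<le> (\<Sum>i\<in>J. M \<bar>x i t / 2\<bar> / (2 * real n))\<close>
      by (subst ennreal_plus) (auto simp: M_nonneg[OF orl] intro!: sum_ennreal[symmetric])
    finally show "ennreal (M \<bar>f t / (4 * P)\<bar>) \<le> (\<Sum>i\<in>J. ennreal (M \<bar>x i t / 2\<bar> / (2 * real n))) + ennreal (1/2)" .
  qed
  have mi: "(\<lambda>t. ennreal (M \<bar>x i t / 2\<bar> / (2 * real n))) \<in> borel_measurable (lebesgue_on {0..1})" if "i \<in> J" for i
  proof -
    have "(\<lambda>t. x i t / 2) \<in> borel_measurable (lebesgue_on {0..1})" using measx[OF that] by simp
    from M_abs_meas[OF orl this] show ?thesis by simp
  qed
  have trm: "(\<integral>\<^sup>+ t. ennreal (M \<bar>x i t / 2\<bar> / (2 * real n)) \<partial>lebesgue_on {0..1}) \<le> ennreal (1 / (2 * real n))"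
    if "i \<in> J" for i
  proof -
    have "(\<integral>\<^sup>+ t. ennreal (M \<bar>x i t / 2\<bar> / (2 * real n)) \<partial>lebesgue_on {0..1})
        = (\<integral>\<^sup>+ t. ennreal (M \<bar>x i t / 2\<bar>) * ennreal (1 / (2 * real n)) \<partial>lebesgue_on {0..1})"
      by (rule nn_integral_cong) (simp add: ennreal_mult'[symmetric] M_nonneg[OF orl])
    also have "\<dots> = orlicz_modular M (\<lambda>t. x i t / 2) * ennreal (1 / (2 * real n))"
      unfolding orlicz_modular_def
      by (rule nn_integral_multc) (use M_abs_meas[OF orl, of "\<lambda>t. x i t / 2"] measx[OF that] in simp)
    also have "\<dots> \<le> 1 * ennreal (1 / (2 * real n))" by (rule mult_right_mono) (use half[OF that] in auto)
    finally show ?thesis by simp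
  qed
  have "orlicz_modular M (\<lambda>t. f t / (4 * P))
      \<le> (\<integral>\<^sup>+ t. (\<Sum>i\<in>J. ennreal (M \<bar>x i t / 2\<bar> / (2 * real n))) + ennreal (1/2) \<partial>lebesgue_on {0..1})"
    unfolding orlicz_modular_def by (rule nn_integral_mono_AE[OF pw])
  also have "\<dots> = (\<Sum>i\<in>J. \<integral>\<^sup>+ t. ennreal (M \<bar>x i t / 2\<bar> / (2 * real n)) \<partial>lebesgue_on {0..1}) + ennreal (1/2)"
    using mi emeasure_leb01 by (subst nn_integral_add) (auto simp: nn_integral_sum)
  also have "\<dots> \<le> (\<Sum>i\<in>J. ennreal (1 / (2 * real n))) + ennreal (1/2)"
    by (intro add_right_mono sum_mono trm)
  also have "(\<Sum>i\<in>J. ennreal (1 / (2 * real n))) = ennreal (real (card J) / (2 * real n))"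
    by (subst sum_ennreal) simp_all
  also have "\<dots> \<le> ennreal (1/2)" using cardJ n by (intro ennreal_leI) (simp add: field_simps)
  also have "ennreal (1/2) + ennreal (1/2) = (1::ennreal)"
    by (subst ennreal_plus[symmetric]) auto
  finally have "orlicz_modular M (\<lambda>t. f t / (4 * P)) \<le> 1" by simp
  then have "lux_norm M f \<le> 4 * P" using P by (intro lux_norm_le) auto
  then show ?thesis using feq by simp
qed

end

lemma phiU_upper:
  fixes M :: "real \<Rightarrow> real" and n :: nat
  assumes orl: "orlicz_function M" and n: "n \<ge> 1" and P: "P > 0" and key: "\<forall>t\<ge>1. real n * M t \<le> M (P * t)"
  shows "phiU M n \<le> ereal (4 * P)"
  unfolding phiU_def XU_def
proof (rule SUP_least)
  fix m :: nat
  show "XU_n M m (\<lambda>k. if 1 \<le> k \<and> k \<le> n then 1 else 0) \<le> ereal (4 * P)"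
    unfolding XU_n_def
    by (rule Sup_least) (use upper_norm[OF orl n P key] in auto)
qed

theorem mainTheorem19:
  fixes M :: "real \<Rightarrow> real"
  assumes "orlicz_function M" and "delta2_infty M"
  shows "\<exists>c>0. \<forall>n::nat. n \<ge> 1 \<longrightarrow>
           ereal (1 / c) * Phi_fun (orlicz_inv M) (real n) \<le> phiU M n \<and>
           phiU M n \<le> ereal c * Phi_fun (orlicz_inv M) (real n)"
proof (intro exI[of _ "4::real"] conjI allI impI)
  show "(0::real) < 4" by simp
  fix n :: nat assume n: "n \<ge> 1"
  obtain P where P: "Phi_fun (orlicz_inv M) (real n) = ereal P" "1 \<le> P" "P \<le> real n"
    "\<forall>t\<ge>1. real n * M t \<le> M (P * t)"
    using Phi_props[OF assms(1) n] by blast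
  have "phiU M n \<le> ereal (4 * P)" using phiU_upper[OF assms(1) n _ P(4)] P(2) by simp
  then show "phiU M n \<le> ereal 4 * Phi_fun (orlicz_inv M) (real n)" using P(1) by simp
  have mx: "max 1 (1 / real n) = 1" using n by auto
  have "Phi_fun (orlicz_inv M) (real n) \<le> phiU M n"
    unfolding Phi_fun_def
    by (rule Sup_least) (use lower_bound[OF assms(1) n] mx in auto)
  moreover have "ereal (1/4) * Phi_fun (orlicz_inv M) (real n) \<le> Phi_fun (orlicz_inv M) (real n)"
    using P(1,2) by simp
  ultimately show "ereal (1 / 4) * Phi_fun (orlicz_inv M) (real n) \<le> phiU M n" by (metis order_trans)
qed

end
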